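(* Let $\Gamma=\bigcup_i\gamma_i$ be an admissible finite collection of transverse unobstructed curves in $\Sigma$. Then every nonzero $b\in H_{\mathbb{R}}$ has both a positive and a negative coordinate in the canonical basis of $C$.
   Context: $\Sigma$ is a closed oriented surface of genus at least two; unobstructed curves are oriented immersed closed curves whose lifts to the universal cover are properly embedded lines. $C=C_2(\Sigma;\mathbb{Z})$ is the free $\mathbb{Z}$-module with basis the connected components of $\Sigma\setminus\Gamma$. The Euler measure $e(S)$ of a surface $S$ with corners is $\frac{1}{2\pi}$ times the integral of the curvature of a metric on $S$ for which the boundary is geodesic and the corners are right angles; it is additive under gluing along boundary segments, and extends to a linear form $e$ on $C$. $H\subset C$ is the subgroup of $2$-chains in $\ker e$ whose boundary is a linear combination of the curves $\gamma_i$, and $H_{\mathbb{R}}$ is its $\mathbb{R}$-span in $C_2(\Sigma;\mathbb{R})=C\otimes\mathbb{R}$. The collection $\Gamma$ is admissible iff every nonzero $b\in H$ has both positive and negative coordinates in the canonical basis of $C$. *)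

theory Defs
  imports Complex_Main "HOL-Library.Function_Algebras"
begin

text \<open>The connected components of
  Sigma minus Gamma are the elements of a finite type 'f, the edges of the
  graph Gamma (arcs between crossings) are the elements of a finite type 'e,
  and the curves gamma_i are indexed by a finite type 'i.
  A 2-chain in C = C_2(Sigma; Z) is a function 'f => int (its coordinates in the
  canonical basis); a real 2-chain is a function 'f => real.
  eul f is the Euler measure of the region f; bd f ed is the coefficient of
  the (oriented) edge ed in the boundary of region f; gam i ed is the
  coefficient of the edge ed in the 1-cycle given by the curve gamma_i.\<close>

definition euler :: "('f::finite \<Rightarrow> real) \<Rightarrow> ('f \<Rightarrow> int) \<Rightarrow> real" where
  "euler eul b = (\<Sum>f\<in>UNIV. real_of_int (b f) * eul f)"

definition boundary :: "('f::finite \<Rightarrow> 'e \<Rightarrow> int) \<Rightarrow> ('f \<Rightarrow> int) \<Rightarrow> ('e \<Rightarrow> int)" where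
  "boundary bd b = (\<lambda>ed. \<Sum>f\<in>UNIV. b f * bd f ed)"

definition Hgrp :: "('f::finite \<Rightarrow> real) \<Rightarrow> ('f \<Rightarrow> 'e \<Rightarrow> int) \<Rightarrow> ('i::finite \<Rightarrow> 'e \<Rightarrow> int)
                    \<Rightarrow> ('f \<Rightarrow> int) set" where
  "Hgrp eul bd gam = {b. euler eul b = 0 \<and>
       (\<exists>c :: 'i \<Rightarrow> int. boundary bd b = (\<lambda>ed. \<Sum>i\<in>UNIV. c i * gam i ed))}"

definition HR :: "('f::finite \<Rightarrow> real) \<Rightarrow> ('f \<Rightarrow> 'e \<Rightarrow> int) \<Rightarrow> ('i::finite \<Rightarrow> 'e \<Rightarrow> int)
                    \<Rightarrow> ('f \<Rightarrow> real) set" where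
  "HR eul bd gam = {x. \<exists>S r. finite S \<and> S \<subseteq> Hgrp eul bd gam \<and>
       x = (\<lambda>f. \<Sum>h\<in>S. r h * real_of_int (h f))}"

definition admissible :: "('f::finite \<Rightarrow> real) \<Rightarrow> ('f \<Rightarrow> 'e \<Rightarrow> int) \<Rightarrow> ('i::finite \<Rightarrow> 'e \<Rightarrow> int) \<Rightarrow> bool" where
  "admissible eul bd gam \<longleftrightarrow>
     (\<forall>b\<in>Hgrp eul bd gam. b \<noteq> 0 \<longrightarrow> (\<exists>f. b f > 0) \<and> (\<exists>f. b f < 0))"

end

theory Submission
  imports Defs
begin

lemma Hgrp_zero: "(\<lambda>f. 0) \<in> Hgrp eul bd gam"
  unfolding Hgrp_def euler_def boundary_def
  by (auto intro!: exI[of _ "\<lambda>i. 0"])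

lemma Hgrp_add:
  assumes "b1 \<in> Hgrp eul bd gam" "b2 \<in> Hgrp eul bd gam"
  shows "(\<lambda>f. b1 f + b2 f) \<in> Hgrp eul bd gam"
proof -
  from assms obtain c1 c2 where e1: "euler eul b1 = 0" and e2: "euler eul b2 = 0"
    and c1: "boundary bd b1 = (\<lambda>ed. \<Sum>i\<in>UNIV. c1 i * gam i ed)"
    and c2: "boundary bd b2 = (\<lambda>ed. \<Sum>i\<in>UNIV. c2 i * gam i ed)"
    unfolding Hgrp_def by blast
  have "euler eul (\<lambda>f. b1 f + b2 f) = euler eul b1 + euler eul b2"
    unfolding euler_def by (simp add: algebra_simps sum.distrib)
  moreover have "boundary bd (\<lambda>f. b1 f + b2 f) = (\<lambda>ed. \<Sum>i\<in>UNIV. (c1 i + c2 i) * gam i ed)"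
  proof
    fix ed
    have "boundary bd (\<lambda>f. b1 f + b2 f) ed = boundary bd b1 ed + boundary bd b2 ed"
      unfolding boundary_def by (simp add: algebra_simps sum.distrib)
    also have "\<dots> = (\<Sum>i\<in>UNIV. (c1 i + c2 i) * gam i ed)"
      using fun_cong[OF c1, of ed] fun_cong[OF c2, of ed]
      by (simp add: algebra_simps sum.distrib)
    finally show "boundary bd (\<lambda>f. b1 f + b2 f) ed = (\<Sum>i\<in>UNIV. (c1 i + c2 i) * gam i ed)" .
  qed
  ultimately show ?thesis using e1 e2 unfolding Hgrp_def by auto
qed

lemma Hgrp_smult:
  assumes "b1 \<in> Hgrp eul bd gam"
  shows "(\<lambda>f. k * b1 f) \<in> Hgrp eul bd gam"
proof -
  from assms obtain c1 where e1: "euler eul b1 = 0"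
    and c1: "boundary bd b1 = (\<lambda>ed. \<Sum>i\<in>UNIV. c1 i * gam i ed)"
    unfolding Hgrp_def by blast
  have "euler eul (\<lambda>f. k * b1 f) = of_int k * euler eul b1"
    unfolding euler_def by (simp add: algebra_simps sum_distrib_left)
  moreover have "boundary bd (\<lambda>f. k * b1 f) = (\<lambda>ed. \<Sum>i\<in>UNIV. (k * c1 i) * gam i ed)"
  proof
    fix ed
    have "boundary bd (\<lambda>f. k * b1 f) ed = k * boundary bd b1 ed"
      unfolding boundary_def by (simp add: algebra_simps sum_distrib_left)
    also have "\<dots> = (\<Sum>i\<in>UNIV. (k * c1 i) * gam i ed)"
      using fun_cong[OF c1, of ed]
      by (simp add: algebra_simps sum_distrib_left)
    finally show "boundary bd (\<lambda>f. k * b1 f) ed = (\<Sum>i\<in>UNIV. (k * c1 i) * gam i ed)" .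
  qed
  ultimately show ?thesis using e1 unfolding Hgrp_def by auto
qed

lemma Hgrp_sum:
  fixes n :: nat
  assumes "\<forall>j<n. e j \<in> Hgrp eul bd gam"
  shows "(\<lambda>f. \<Sum>j<n. k j * e j f) \<in> Hgrp eul bd gam"
  using assms
proof (induction n)
  case 0
  then show ?case using Hgrp_zero by simp
next
  case (Suc n)
  have "(\<lambda>f. (\<Sum>j<n. k j * e j f) + k n * e n f) \<in> Hgrp eul bd gam"
    using Suc by (intro Hgrp_add Hgrp_smult) auto
  then show ?case by simp
qed

lemma common_denom:
  fixes q :: "nat \<Rightarrow> real"
  shows "(\<forall>j<n. q j \<in> \<rat>) \<Longrightarrow> \<exists>D::int. D > 0 \<and> (\<forall>j<n. of_int D * q j \<in> \<int>)"
proof (induction n)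
  case 0
  then show ?case by (intro exI[of _ 1]) auto
next
  case (Suc n)
  then obtain D :: int where D: "D > 0" "\<forall>j<n. of_int D * q j \<in> \<int>" by auto
  have "q n \<in> \<rat>" using Suc.prems by auto
  then obtain a b :: int where ab: "b > 0" "q n = of_int a / of_int b"
    by (metis Rats_cases')
  show ?case
  proof (intro exI[of _ "D * b"] conjI allI impI)
    show "D * b > 0" using D ab by simp
    fix j assume "j < Suc n"
    then consider "j < n" | "j = n" by linarith
    then show "of_int (D * b) * q j \<in> \<int>"
    proof cases
      case 1
      then obtain z where "of_int D * q j = of_int z" using D by (metis Ints_cases)
      have "of_int (D * b) * q j = of_int b * (of_int D * q j)" by (simp add: algebra_simps)
      also have "\<dots> = of_int (b * z)" using \<open>of_int D * q j = of_int z\<close> by simp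
      finally have "of_int (D * b) * q j = of_int (b * z)" .
      then show ?thesis by (metis Ints_of_int)
    next
      case 2
      then have "of_int (D * b) * q j = of_int (D * a)" using ab by simp
      then show ?thesis by (metis Ints_of_int)
    qed
  qed
qed


lemma rat_approx:
  fixes F :: "'a set" and n :: nat
  assumes fin: "finite F"
  shows "\<And>(L :: 'a \<Rightarrow> nat \<Rightarrow> real) (r :: nat \<Rightarrow> real) (\<epsilon>::real).
     (\<forall>f\<in>F. \<forall>j<n. L f j \<in> \<rat>) \<Longrightarrow> \<epsilon> > 0 \<Longrightarrow>
     \<exists>q. (\<forall>j<n. q j \<in> \<rat>) \<and>
         (\<forall>f\<in>F. (\<Sum>j<n. L f j * r j) = 0 \<longrightarrow> (\<Sum>j<n. L f j * q j) = 0) \<and>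
         (\<forall>f\<in>F. \<bar>(\<Sum>j<n. L f j * q j) - (\<Sum>j<n. L f j * r j)\<bar> < \<epsilon>)"
proof (induction n)
  case 0
  then show ?case by (intro exI[of _ "\<lambda>j. 0"]) auto
next
  case (Suc n)
  note hL = Suc.prems(1) and eps = Suc.prems(2)
  show ?case
  proof (cases "\<exists>g\<in>F. (\<Sum>j<Suc n. L g j * r j) = 0 \<and> L g n \<noteq> 0")
    case True
    then obtain g where g: "g \<in> F" "(\<Sum>j<Suc n. L g j * r j) = 0" "L g n \<noteq> 0" by blast
    define L' where "L' f j = L f j - L f n * L g j / L g n" for f j
    have L'rat: "\<forall>f\<in>F. \<forall>j<n. L' f j \<in> \<rat>"
      using hL g(1) unfolding L'_def by (auto intro!: Rats_diff Rats_mult Rats_divide)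
    have key: "(\<Sum>j<n. L' f j * x j) = (\<Sum>j<Suc n. L f j * x j) - L f n / L g n * (\<Sum>j<Suc n. L g j * x j)"
      for f x
    proof -
      have "(\<Sum>j<n. L' f j * x j) = (\<Sum>j<n. L f j * x j) - L f n / L g n * (\<Sum>j<n. L g j * x j)"
        unfolding L'_def by (simp add: left_diff_distrib sum_subtractf sum_distrib_left algebra_simps)
      also have "\<dots> = (\<Sum>j<Suc n. L f j * x j) - L f n / L g n * (\<Sum>j<Suc n. L g j * x j)"
        using g(3) by (simp add: algebra_simps)
      finally show ?thesis .
    qed
    obtain q' where q': "\<forall>j<n. q' j \<in> \<rat>"
      "\<forall>f\<in>F. (\<Sum>j<n. L' f j * r j) = 0 \<longrightarrow> (\<Sum>j<n. L' f j * q' j) = 0"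
      "\<forall>f\<in>F. \<bar>(\<Sum>j<n. L' f j * q' j) - (\<Sum>j<n. L' f j * r j)\<bar> < \<epsilon>"
      using Suc.IH[OF L'rat eps] by blast
    define q where "q = q'(n := - (\<Sum>j<n. L g j * q' j) / L g n)"
    have qs: "(\<Sum>j<n. M j * q j) = (\<Sum>j<n. M j * q' j)" for M
      unfolding q_def by (intro sum.cong) auto
    have qg: "(\<Sum>j<Suc n. L g j * q j) = 0"
      using g(3) qs[of "L g"] by (simp add: q_def)
    have lq: "(\<Sum>j<Suc n. L f j * q j) = (\<Sum>j<n. L' f j * q' j)" for f
      using key[of f q] qg qs[of "L' f"] by simp
    have lr: "(\<Sum>j<Suc n. L f j * r j) = (\<Sum>j<n. L' f j * r j)" for f
      using key[of f r] g(2) by simp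
    have qrat: "\<forall>j<Suc n. q j \<in> \<rat>"
    proof (intro allI impI)
      fix j assume "j < Suc n"
      have "L g n \<in> \<rat>" using hL g(1) by auto
      moreover have "(\<Sum>j<n. L g j * q' j) \<in> \<rat>"
        using hL g(1) q'(1) by (intro Rats_sum Rats_mult) auto
      ultimately show "q j \<in> \<rat>"
        using q'(1) \<open>j < Suc n\<close> unfolding q_def by (auto simp: less_Suc_eq)
    qed
    show ?thesis
      using qrat q'(2,3) lq lr by (intro exI[of _ q]) auto
  next
    case False
    define M where "M = 1 + (\<Sum>f\<in>F. \<bar>L f n\<bar>)"
    have Mpos: "M > 0" unfolding M_def by (simp add: add_pos_nonneg sum_nonneg)
    have Mge: "\<bar>L f n\<bar> \<le> M" if "f \<in> F" for f
    proof -
      have "\<bar>L f n\<bar> \<le> (\<Sum>f\<in>F. \<bar>L f n\<bar>)"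
        using fin that by (intro member_le_sum) auto
      then show ?thesis unfolding M_def by simp
    qed
    have d: "\<epsilon> / (2 * M) > 0" using eps Mpos by simp
    obtain t where t: "t \<in> \<rat>" "r n - \<epsilon> / (2 * M) < t" "t < r n + \<epsilon> / (2 * M)"
      using Rats_dense_in_real[of "r n - \<epsilon> / (2 * M)" "r n + \<epsilon> / (2 * M)"] d by auto
    have hL': "\<forall>f\<in>F. \<forall>j<n. L f j \<in> \<rat>" using hL by auto
    obtain q' where q': "\<forall>j<n. q' j \<in> \<rat>"
      "\<forall>f\<in>F. (\<Sum>j<n. L f j * r j) = 0 \<longrightarrow> (\<Sum>j<n. L f j * q' j) = 0"
      "\<forall>f\<in>F. \<bar>(\<Sum>j<n. L f j * q' j) - (\<Sum>j<n. L f j * r j)\<bar> < \<epsilon> / 2"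
      using Suc.IH[OF hL', of "\<epsilon>/2" r] eps by auto
    define q where "q = q'(n := t)"
    have qs: "(\<Sum>j<n. L f j * q j) = (\<Sum>j<n. L f j * q' j)" for f
      unfolding q_def by (intro sum.cong) auto
    have lq: "(\<Sum>j<Suc n. L f j * q j) = (\<Sum>j<n. L f j * q' j) + L f n * t" for f
      using qs[of f] by (simp add: q_def)
    have qrat: "\<forall>j<Suc n. q j \<in> \<rat>"
      using q'(1) t(1) unfolding q_def by (auto simp: less_Suc_eq)
    have zero: "(\<Sum>j<Suc n. L f j * q j) = 0" if "f \<in> F" "(\<Sum>j<Suc n. L f j * r j) = 0" for f
    proof -
      have "L f n = 0" using False that by auto
      then have "(\<Sum>j<n. L f j * r j) = 0" using that(2) by simp
      then have "(\<Sum>j<n. L f j * q' j) = 0" using q'(2) that(1) by auto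
      then show ?thesis using lq[of f] \<open>L f n = 0\<close> by simp
    qed
    have bound: "\<bar>(\<Sum>j<Suc n. L f j * q j) - (\<Sum>j<Suc n. L f j * r j)\<bar> < \<epsilon>" if "f \<in> F" for f
    proof -
      have eq: "(\<Sum>j<Suc n. L f j * q j) - (\<Sum>j<Suc n. L f j * r j)
          = ((\<Sum>j<n. L f j * q' j) - (\<Sum>j<n. L f j * r j)) + L f n * (t - r n)"
        using lq[of f] by (simp add: algebra_simps)
      have a: "\<bar>(\<Sum>j<n. L f j * q' j) - (\<Sum>j<n. L f j * r j)\<bar> < \<epsilon> / 2" using q'(3) that by auto
      have "\<bar>L f n * (t - r n)\<bar> = \<bar>L f n\<bar> * \<bar>t - r n\<bar>" by (simp add: abs_mult)
      also have "\<dots> \<le> M * (\<epsilon> / (2 * M))"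
        using Mge[OF that] t(2,3) by (intro mult_mono) auto
      also have "\<dots> = \<epsilon> / 2" using Mpos by simp
      finally have b: "\<bar>L f n * (t - r n)\<bar> \<le> \<epsilon> / 2" .
      show ?thesis unfolding eq using a b by linarith
    qed
    show ?thesis using qrat zero bound by (intro exI[of _ q]) auto
  qed
qed


lemma nonneg_contra:
  fixes eul :: "'f::finite \<Rightarrow> real" and bd :: "'f \<Rightarrow> 'e \<Rightarrow> int" and gam :: "'i::finite \<Rightarrow> 'e \<Rightarrow> int"
  assumes adm: "admissible eul bd gam"
    and bH: "b \<in> HR eul bd gam" and bnz: "b \<noteq> 0" and nn: "\<forall>f. b f \<ge> 0"
  shows False
proof -
  obtain S r where S: "finite S" "S \<subseteq> Hgrp eul bd gam"
    and bdef: "b = (\<lambda>f. \<Sum>h\<in>S. r h * real_of_int (h f))"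
    using bH unfolding HR_def by blast
  define n where "n = card S"
  obtain e where e: "bij_betw e {..<n} S"
    using ex_bij_betw_nat_finite[OF S(1)] unfolding n_def by (metis atLeast0LessThan)
  have eH: "\<forall>j<n. e j \<in> Hgrp eul bd gam" using e S(2) bij_betw_apply by fastforce
  define L :: "'f \<Rightarrow> nat \<Rightarrow> real" where "L f j = real_of_int (e j f)" for f j
  define rr where "rr j = r (e j)" for j
  have bL: "b f = (\<Sum>j<n. L f j * rr j)" for f
  proof -
    have "b f = (\<Sum>h\<in>S. r h * real_of_int (h f))" using bdef by simp
    also have "\<dots> = (\<Sum>j<n. r (e j) * real_of_int (e j f))"
      using sum.reindex_bij_betw[OF e, of "\<lambda>h. r h * real_of_int (h f)"] by simp
    finally show ?thesis unfolding L_def rr_def by (simp add: mult.commute)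
  qed
  obtain f0 where "b f0 \<noteq> 0" using bnz by (auto simp: fun_eq_iff)
  then have f0: "b f0 > 0" using nn[rule_format, of f0] by linarith
  define P where "P = b ` {f. b f > 0}"
  have Pfin: "finite P" "P \<noteq> {}" using f0 unfolding P_def by auto
  define \<epsilon> where "\<epsilon> = Min P"
  have epos: "\<epsilon> > 0" unfolding \<epsilon>_def using Pfin by (subst Min_gr_iff) (auto simp: P_def)
  have ele: "\<epsilon> \<le> b f" if "b f > 0" for f
    unfolding \<epsilon>_def using Pfin that by (intro Min_le) (auto simp: P_def)
  have Lrat: "\<forall>f\<in>UNIV. \<forall>j<n. L f j \<in> \<rat>" unfolding L_def by auto
  obtain q where q: "\<forall>j<n. q j \<in> \<rat>"
    "\<forall>f\<in>UNIV. (\<Sum>j<n. L f j * rr j) = 0 \<longrightarrow> (\<Sum>j<n. L f j * q j) = 0"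
    "\<forall>f\<in>UNIV. \<bar>(\<Sum>j<n. L f j * q j) - (\<Sum>j<n. L f j * rr j)\<bar> < \<epsilon>"
    using rat_approx[of "UNIV :: 'f set" n L \<epsilon> rr] Lrat epos by auto
  define c where "c f = (\<Sum>j<n. L f j * q j)" for f
  have cnn: "c f \<ge> 0" for f
  proof (cases "b f = 0")
    case True then show ?thesis using q(2) bL[of f] unfolding c_def by simp
  next
    case False
    then have "b f > 0" using nn less_eq_real_def by auto
    have "\<bar>c f - b f\<bar> < \<epsilon>" using q(3) bL[of f] unfolding c_def by simp
    then show ?thesis using ele[OF \<open>b f > 0\<close>] by linarith
  qed
  have "\<bar>c f0 - b f0\<bar> < \<epsilon>" using q(3) bL[of f0] unfolding c_def by simp
  then have c0: "c f0 > 0" using ele[OF f0] by linarith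
  obtain D :: int where D: "D > 0" "\<forall>j<n. of_int D * q j \<in> \<int>"
    using common_denom[OF q(1)] by blast
  define k where "k j = \<lfloor>of_int D * q j\<rfloor>" for j
  have k: "real_of_int (k j) = of_int D * q j" if "j < n" for j
  proof -
    have "of_int D * q j \<in> \<int>" using D(2) that by blast
    then obtain z where z: "of_int D * q j = of_int z" by (rule Ints_cases)
    show ?thesis unfolding k_def z by simp
  qed
  define hh where "hh = (\<lambda>f. \<Sum>j<n. k j * e j f)"
  have hhH: "hh \<in> Hgrp eul bd gam" unfolding hh_def using Hgrp_sum[OF eH, where k=k] .
  have hhc: "real_of_int (hh f) = of_int D * c f" for f
  proof -
    have "real_of_int (hh f) = (\<Sum>j<n. real_of_int (k j) * real_of_int (e j f))"
      unfolding hh_def by simp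
    also have "\<dots> = (\<Sum>j<n. of_int D * (L f j * q j))"
      using k by (intro sum.cong) (auto simp: L_def)
    also have "\<dots> = of_int D * c f" unfolding c_def by (simp add: sum_distrib_left)
    finally show ?thesis .
  qed
  have hhnn: "hh f \<ge> 0" for f
  proof -
    have "real_of_int (hh f) \<ge> 0" using hhc[of f] cnn[of f] D(1) by simp
    then show ?thesis by simp
  qed
  have hh0: "hh f0 > 0"
  proof -
    have "real_of_int (hh f0) > 0" using hhc[of f0] c0 D(1) by simp
    then show ?thesis by simp
  qed
  have "hh \<noteq> 0" using hh0 by (metis less_irrefl zero_fun_def)
  then obtain f where "hh f < 0" using adm hhH unfolding admissible_def by blast
  then show False using hhnn[of f] by simp
qed

theorem lemma3p3:
  fixes eul :: "'f::finite \<Rightarrow> real" and bd :: "'f \<Rightarrow> 'e \<Rightarrow> int" and gam :: "'i::finite \<Rightarrow> 'e \<Rightarrow> int"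
  assumes "admissible eul bd gam"
    and "b \<in> HR eul bd gam" and "b \<noteq> 0"
  shows "(\<exists>f. b f > 0) \<and> (\<exists>f. b f < 0)"
proof
  show "\<exists>f. b f < 0"
  proof (rule ccontr)
    assume "\<not> (\<exists>f. b f < 0)"
    then have "\<forall>f. b f \<ge> 0" by (simp add: not_less)
    then show False using nonneg_contra[OF assms] by blast
  qed
next
  show "\<exists>f. b f > 0"
  proof (rule ccontr)
    assume "\<not> (\<exists>f. b f > 0)"
    then have nn: "\<forall>f. (- b) f \<ge> 0" by (simp add: not_less)
    obtain S r where S: "finite S" "S \<subseteq> Hgrp eul bd gam"
      and bdef: "b = (\<lambda>f. \<Sum>h\<in>S. r h * real_of_int (h f))"
      using assms(2) unfolding HR_def by blast
    have "- b \<in> HR eul bd gam" unfolding HR_def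
    proof (intro CollectI exI conjI)
      show "finite S" "S \<subseteq> Hgrp eul bd gam" using S by auto
      show "- b = (\<lambda>f. \<Sum>h\<in>S. (- r h) * real_of_int (h f))"
        using bdef by (simp add: fun_eq_iff sum_negf)
    qed
    moreover have "- b \<noteq> 0" using assms(3) by simp
    ultimately show False using nonneg_contra[OF assms(1)] nn by blast
  qed
qed

end
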